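(* For either choice $\zeta\in\{q,-q^3\}$, the partition function $\mathcal{Z}(\lambda_1,\dots,\lambda_L)=\langle\bar0|\mathcal{E}(\lambda_L)\cdots\mathcal{E}(\lambda_1)|0\rangle$ satisfies, at the specialization $\lambda_i=\mu_i$ for $1\le i\le L$, $$\mathcal{Z}(\mu_1,\mu_2,\dots,\mu_L)=\prod_{i,j=1}^L a(\mu_i-\mu_j).$$
   Context: Let $q\in\mathbb{C}\setminus\{0\}$ (with a fixed choice of $q^{1/2}$) and $\zeta\in\{q,-q^3\}$ ($\zeta=q$: Fateev–Zamolodchikov model; $\zeta=-q^3$: Izergin–Korepin model). For $\lambda\in\mathbb{C}$ put $x=e^{2\lambda}$ and define $a(\lambda)=(x-\zeta)(x-q^2)$, $b(\lambda)=q(x-1)(x-\zeta)$, $c(\lambda)=(1-q^2)(x-\zeta)$, $\bar c(\lambda)=x(1-q^2)(x-\zeta)$, and for $\alpha,\beta\in\{1,2,3\}$, with $\beta'=4-\beta$: $d_{\alpha,\beta}(\lambda)=q(x-1)(x-\zeta)+x(q^2-1)(\zeta-1)$ if $\alpha=\beta=2$; $d_{\alpha,\beta}(\lambda)=(x-1)[(x-\zeta)+x(q^2-1)]$ if $\alpha=\beta\neq 2$; $d_{\alpha,\beta}(\lambda)=(q^2-1)[\zeta(x-1)q^{(\alpha-\beta)/2}-\delta_{\alpha,\beta'}(x-\zeta)]$ if $\alpha<\beta$; $d_{\alpha,\beta}(\lambda)=x(q^2-1)[(x-1)q^{(\alpha-\beta)/2}-\delta_{\alpha,\beta'}(x-\zeta)]$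 if $\alpha>\beta$. Let $e_1,e_2,e_3$ be the standard basis of $\mathbb{C}^3$ and $E_{\alpha,\beta}$ the unit matrices. Define $\mathcal{R}(\lambda)\in\mathrm{End}(\mathbb{C}^3\otimes\mathbb{C}^3)$ as the $9\times 9$ matrix in the ordered basis $e_1\otimes e_1,e_1\otimes e_2,e_1\otimes e_3,e_2\otimes e_1,e_2\otimes e_2,e_2\otimes e_3,e_3\otimes e_1,e_3\otimes e_2,e_3\otimes e_3$ (indices $1,\dots,9$) whose only nonzero entries (row, column) are: $(1,1)=a$; $(2,2)=b$, $(2,4)=c$; $(3,3)=d_{1,1}$, $(3,5)=d_{1,2}$, $(3,7)=d_{1,3}$; $(4,2)=\bar c$, $(4,4)=b$; $(5,3)=d_{2,1}$, $(5,5)=d_{2,2}$, $(5,7)=d_{2,3}$; $(6,6)=b$, $(6,8)=c$; $(7,3)=d_{3,1}$, $(7,5)=d_{3,2}$, $(7,7)=d_{3,3}$; $(8,6)=\bar c$, $(8,8)=b$; $(9,9)=a$ (all evaluated at $\lambda$). Fix $L\ge1$ and inhomogeneities $\mu_1,\dots,\mu_L\in\mathbb{C}$. With $V_a=V_1=\dots=V_L=\mathbb{C}^3$, let $\mathcal{T}(\lambda)=\mathcal{R}_{a1}(\lambda-\mu_1)\cdots\mathcal{R}_{aL}(\lambda-\mu_L)$, where $\mathcal{R}_{aj}$ acts as $\mathcal{R}$ on $V_a\otimes V_j$. Write $\mathcal{T}(\lambda)=\sum_{\alpha,\beta}E_{\alpha,\beta}\otimes\mathcal{T}_\alpha^\beta(\lambda)$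 and set $\mathcal{E}(\lambda)=\mathcal{T}_1^3(\lambda)$, an operator on $V_1\otimes\cdots\otimes V_L$. Let $|0\rangle=e_1^{\otimes L}$ and let $\langle\bar0|$ be the dual vector of $e_3^{\otimes L}$. *)

theory Defs
  imports Complex_Main
begin

text \<open>Parameters: q, a fixed square root s of q (so q powi (k/2) is s powi k), and zeta.
  The spectral variable is x = exp(2 lambda).\<close>

definition wa :: "complex \<Rightarrow> complex \<Rightarrow> complex \<Rightarrow> complex" where
  "wa q z l = (let x = exp (2 * l) in (x - z) * (x - q^2))"

definition wb :: "complex \<Rightarrow> complex \<Rightarrow> complex \<Rightarrow> complex" where
  "wb q z l = (let x = exp (2 * l) in q * (x - 1) * (x - z))"

definition wc :: "complex \<Rightarrow> complex \<Rightarrow> complex \<Rightarrow> complex" where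
  "wc q z l = (let x = exp (2 * l) in (1 - q^2) * (x - z))"

definition wcb :: "complex \<Rightarrow> complex \<Rightarrow> complex \<Rightarrow> complex" where
  "wcb q z l = (let x = exp (2 * l) in x * (1 - q^2) * (x - z))"

text \<open>d_{alpha,beta}; q^((alpha-beta)/2) is s powi (alpha - beta); beta' = 4 - beta.\<close>
definition wd :: "complex \<Rightarrow> complex \<Rightarrow> complex \<Rightarrow> nat \<Rightarrow> nat \<Rightarrow> complex \<Rightarrow> complex" where
  "wd q s z \<alpha> \<beta> l = (let x = exp (2 * l);
      h = s powi (int \<alpha> - int \<beta>);
      \<delta> = (if \<alpha> = 4 - \<beta> then 1 else 0) in
    if \<alpha> = \<beta> \<and> \<alpha> = 2 then q * (x - 1) * (x - z) + x * (q^2 - 1) * (z - 1)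
    else if \<alpha> = \<beta> then (x - 1) * ((x - z) + x * (q^2 - 1))
    else if \<alpha> < \<beta> then (q^2 - 1) * (z * (x - 1) * h - \<delta> * (x - z))
    else x * (q^2 - 1) * ((x - 1) * h - \<delta> * (x - z)))"

definition Rmat :: "complex \<Rightarrow> complex \<Rightarrow> complex \<Rightarrow> complex \<Rightarrow> nat \<Rightarrow> nat \<Rightarrow> complex" where
  "Rmat q s z l r c =
    (if (r, c) = (1, 1) then wa q z l
     else if (r, c) = (2, 2) then wb q z l
     else if (r, c) = (2, 4) then wc q z l
     else if (r, c) = (3, 3) then wd q s z 1 1 l
     else if (r, c) = (3, 5) then wd q s z 1 2 l
     else if (r, c) = (3, 7) then wd q s z 1 3 l
     else if (r, c) = (4, 2) then wcb q z l
     else if (r, c) = (4, 4) then wb q z l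
     else if (r, c) = (5, 3) then wd q s z 2 1 l
     else if (r, c) = (5, 5) then wd q s z 2 2 l
     else if (r, c) = (5, 7) then wd q s z 2 3 l
     else if (r, c) = (6, 6) then wb q z l
     else if (r, c) = (6, 8) then wc q z l
     else if (r, c) = (7, 3) then wd q s z 3 1 l
     else if (r, c) = (7, 5) then wd q s z 3 2 l
     else if (r, c) = (7, 7) then wd q s z 3 3 l
     else if (r, c) = (8, 6) then wcb q z l
     else if (r, c) = (8, 8) then wb q z l
     else if (r, c) = (9, 9) then wa q z l
     else 0)"

text \<open>Matrix element <e_alpha (x) e_i | R | e_beta (x) e_j>, alpha,i,beta,j in {1,2,3}.\<close>
definition Rloc :: "complex \<Rightarrow> complex \<Rightarrow> complex \<Rightarrow> complex \<Rightarrow> nat \<Rightarrow> nat \<Rightarrow> nat \<Rightarrow> nat \<Rightarrow> complex" where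
  "Rloc q s z l \<alpha> i \<beta> j = Rmat q s z l (3 * (\<alpha> - 1) + i) (3 * (\<beta> - 1) + j)"

text \<open>Basis states of V_1 (x) ... (x) V_L: lists of length L with entries in {1,2,3}.\<close>
definition states :: "nat \<Rightarrow> nat list set" where
  "states L = {xs. set xs \<subseteq> {1, 2, 3} \<and> length xs = L}"

text \<open>Tmono q s z l mus alpha beta is js is the matrix element <is| T_alpha^beta(l) |js> of the
  monodromy T(l) = R_{a1}(l - mu_1) ... R_{aL}(l - mu_L), mus = [mu_1, ..., mu_L]
  (the ordered product written out over the auxiliary-space indices).\<close>
fun Tmono :: "complex \<Rightarrow> complex \<Rightarrow> complex \<Rightarrow> complex \<Rightarrow> complex list \<Rightarrow> nat \<Rightarrow> nat \<Rightarrow>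
    nat list \<Rightarrow> nat list \<Rightarrow> complex" where
  "Tmono q s z l [] \<alpha> \<beta> is js = (if \<alpha> = \<beta> \<and> is = [] \<and> js = [] then 1 else 0)"
| "Tmono q s z l (\<mu> # mus) \<alpha> \<beta> (i # is) (j # js) =
     (\<Sum>\<gamma>\<in>{1, 2, 3}. Rloc q s z (l - \<mu>) \<alpha> i \<gamma> j * Tmono q s z l mus \<gamma> \<beta> is js)"
| "Tmono q s z l (\<mu> # mus) \<alpha> \<beta> _ _ = 0"

definition Eop :: "complex \<Rightarrow> complex \<Rightarrow> complex \<Rightarrow> complex list \<Rightarrow> complex \<Rightarrow> nat list \<Rightarrow> nat list \<Rightarrow> complex" where
  "Eop q s z mus l is js = Tmono q s z l mus 1 3 is js"

definition applyE :: "complex \<Rightarrow> complex \<Rightarrow> complex \<Rightarrow> complex list \<Rightarrow> complex \<Rightarrow>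
    (nat list \<Rightarrow> complex) \<Rightarrow> nat list \<Rightarrow> complex" where
  "applyE q s z mus l v = (\<lambda>is. \<Sum>js\<in>states (length mus). Eop q s z mus l is js * v js)"

text \<open>Z(lams) = <bar 0| E(lambda_L) ... E(lambda_1) |0>, lams = [lambda_1, ..., lambda_L].\<close>
definition Zpf :: "complex \<Rightarrow> complex \<Rightarrow> complex \<Rightarrow> complex list \<Rightarrow> complex list \<Rightarrow> complex" where
  "Zpf q s z mus lams =
    foldl (\<lambda>v l. applyE q s z mus l v)
          (\<lambda>js. if js = replicate (length mus) 1 then 1 else 0) lams
          (replicate (length mus) 3)"

end

theory Submission
  imports Defs
begin

definition RHm :: "complex \<Rightarrow> complex \<Rightarrow> complex \<Rightarrow> complex \<Rightarrow> complex \<Rightarrow> complex \<Rightarrow> complex \<Rightarrow> nat \<Rightarrow> nat \<Rightarrow> complex" where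
  "RHm q z w1 w2 s X Y r c =
    (if (r, c) = (1, 1) then (X - z*Y) * (X - q^2*Y)
     else if (r, c) = (2, 2) then q * (X - Y) * (X - z*Y)
     else if (r, c) = (2, 4) then (1 - q^2) * (X - z*Y) * Y
     else if (r, c) = (3, 3) then (X - Y) * ((X - z*Y) + X * (q^2 - 1))
     else if (r, c) = (3, 5) then (q^2 - 1) * w1 * (X - Y) * Y
     else if (r, c) = (3, 7) then (q^2 - 1) * (w2 * (X - Y) - (X - z*Y)) * Y
     else if (r, c) = (4, 2) then X * (1 - q^2) * (X - z*Y)
     else if (r, c) = (4, 4) then q * (X - Y) * (X - z*Y)
     else if (r, c) = (5, 3) then X * (q^2 - 1) * (X - Y) * s
     else if (r, c) = (5, 5) then q * (X - Y) * (X - z*Y) + X * Y * (q^2 - 1) * (z - 1)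
     else if (r, c) = (5, 7) then (q^2 - 1) * w1 * (X - Y) * Y
     else if (r, c) = (6, 6) then q * (X - Y) * (X - z*Y)
     else if (r, c) = (6, 8) then (1 - q^2) * (X - z*Y) * Y
     else if (r, c) = (7, 3) then X * (q^2 - 1) * ((X - Y) * s^2 - (X - z*Y))
     else if (r, c) = (7, 5) then X * (q^2 - 1) * (X - Y) * s
     else if (r, c) = (7, 7) then (X - Y) * ((X - z*Y) + X * (q^2 - 1))
     else if (r, c) = (8, 6) then X * (1 - q^2) * (X - z*Y)
     else if (r, c) = (8, 8) then q * (X - Y) * (X - z*Y)
     else if (r, c) = (9, 9) then (X - z*Y) * (X - q^2*Y)
     else 0)"

definition RH :: "complex \<Rightarrow> complex \<Rightarrow> complex \<Rightarrow> complex \<Rightarrow> complex \<Rightarrow> complex \<Rightarrow> complex \<Rightarrow> nat \<Rightarrow> nat \<Rightarrow> nat \<Rightarrow> nat \<Rightarrow> complex" where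
  "RH q z w1 w2 s X Y \<alpha> i \<beta> j = RHm q z w1 w2 s X Y (3 * (\<alpha> - 1) + i) (3 * (\<beta> - 1) + j)"

lemma RH_1111: "RH q z w1 w2 s X Y 1 1 1 1 = (X - z*Y) * (X - q^2*Y)" by (simp add: RH_def RHm_def)
lemma RH_1112: "RH q z w1 w2 s X Y 1 1 1 2 = 0" by (simp add: RH_def RHm_def)
lemma RH_1113: "RH q z w1 w2 s X Y 1 1 1 3 = 0" by (simp add: RH_def RHm_def)
lemma RH_1121: "RH q z w1 w2 s X Y 1 1 2 1 = 0" by (simp add: RH_def RHm_def)
lemma RH_1122: "RH q z w1 w2 s X Y 1 1 2 2 = 0" by (simp add: RH_def RHm_def)
lemma RH_1123: "RH q z w1 w2 s X Y 1 1 2 3 = 0" by (simp add: RH_def RHm_def)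
lemma RH_1131: "RH q z w1 w2 s X Y 1 1 3 1 = 0" by (simp add: RH_def RHm_def)
lemma RH_1132: "RH q z w1 w2 s X Y 1 1 3 2 = 0" by (simp add: RH_def RHm_def)
lemma RH_1133: "RH q z w1 w2 s X Y 1 1 3 3 = 0" by (simp add: RH_def RHm_def)
lemma RH_1211: "RH q z w1 w2 s X Y 1 2 1 1 = 0" by (simp add: RH_def RHm_def)
lemma RH_1212: "RH q z w1 w2 s X Y 1 2 1 2 = q * (X - Y) * (X - z*Y)" by (simp add: RH_def RHm_def)
lemma RH_1213: "RH q z w1 w2 s X Y 1 2 1 3 = 0" by (simp add: RH_def RHm_def)
lemma RH_1221: "RH q z w1 w2 s X Y 1 2 2 1 = (1 - q^2) * (X - z*Y) * Y" by (simp add: RH_def RHm_def)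
lemma RH_1222: "RH q z w1 w2 s X Y 1 2 2 2 = 0" by (simp add: RH_def RHm_def)
lemma RH_1223: "RH q z w1 w2 s X Y 1 2 2 3 = 0" by (simp add: RH_def RHm_def)
lemma RH_1231: "RH q z w1 w2 s X Y 1 2 3 1 = 0" by (simp add: RH_def RHm_def)
lemma RH_1232: "RH q z w1 w2 s X Y 1 2 3 2 = 0" by (simp add: RH_def RHm_def)
lemma RH_1233: "RH q z w1 w2 s X Y 1 2 3 3 = 0" by (simp add: RH_def RHm_def)
lemma RH_1311: "RH q z w1 w2 s X Y 1 3 1 1 = 0" by (simp add: RH_def RHm_def)
lemma RH_1312: "RH q z w1 w2 s X Y 1 3 1 2 = 0" by (simp add: RH_def RHm_def)
lemma RH_1313: "RH q z w1 w2 s X Y 1 3 1 3 = (X - Y) * ((X - z*Y) + X * (q^2 - 1))" by (simp add: RH_def RHm_def)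
lemma RH_1321: "RH q z w1 w2 s X Y 1 3 2 1 = 0" by (simp add: RH_def RHm_def)
lemma RH_1322: "RH q z w1 w2 s X Y 1 3 2 2 = (q^2 - 1) * w1 * (X - Y) * Y" by (simp add: RH_def RHm_def)
lemma RH_1323: "RH q z w1 w2 s X Y 1 3 2 3 = 0" by (simp add: RH_def RHm_def)
lemma RH_1331: "RH q z w1 w2 s X Y 1 3 3 1 = (q^2 - 1) * (w2 * (X - Y) - (X - z*Y)) * Y" by (simp add: RH_def RHm_def)
lemma RH_1332: "RH q z w1 w2 s X Y 1 3 3 2 = 0" by (simp add: RH_def RHm_def)
lemma RH_1333: "RH q z w1 w2 s X Y 1 3 3 3 = 0" by (simp add: RH_def RHm_def)
lemma RH_2111: "RH q z w1 w2 s X Y 2 1 1 1 = 0" by (simp add: RH_def RHm_def)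
lemma RH_2112: "RH q z w1 w2 s X Y 2 1 1 2 = X * (1 - q^2) * (X - z*Y)" by (simp add: RH_def RHm_def)
lemma RH_2113: "RH q z w1 w2 s X Y 2 1 1 3 = 0" by (simp add: RH_def RHm_def)
lemma RH_2121: "RH q z w1 w2 s X Y 2 1 2 1 = q * (X - Y) * (X - z*Y)" by (simp add: RH_def RHm_def)
lemma RH_2122: "RH q z w1 w2 s X Y 2 1 2 2 = 0" by (simp add: RH_def RHm_def)
lemma RH_2123: "RH q z w1 w2 s X Y 2 1 2 3 = 0" by (simp add: RH_def RHm_def)
lemma RH_2131: "RH q z w1 w2 s X Y 2 1 3 1 = 0" by (simp add: RH_def RHm_def)
lemma RH_2132: "RH q z w1 w2 s X Y 2 1 3 2 = 0" by (simp add: RH_def RHm_def)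
lemma RH_2133: "RH q z w1 w2 s X Y 2 1 3 3 = 0" by (simp add: RH_def RHm_def)
lemma RH_2211: "RH q z w1 w2 s X Y 2 2 1 1 = 0" by (simp add: RH_def RHm_def)
lemma RH_2212: "RH q z w1 w2 s X Y 2 2 1 2 = 0" by (simp add: RH_def RHm_def)
lemma RH_2213: "RH q z w1 w2 s X Y 2 2 1 3 = X * (q^2 - 1) * (X - Y) * s" by (simp add: RH_def RHm_def)
lemma RH_2221: "RH q z w1 w2 s X Y 2 2 2 1 = 0" by (simp add: RH_def RHm_def)
lemma RH_2222: "RH q z w1 w2 s X Y 2 2 2 2 = q * (X - Y) * (X - z*Y) + X * Y * (q^2 - 1) * (z - 1)" by (simp add: RH_def RHm_def)
lemma RH_2223: "RH q z w1 w2 s X Y 2 2 2 3 = 0" by (simp add: RH_def RHm_def)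
lemma RH_2231: "RH q z w1 w2 s X Y 2 2 3 1 = (q^2 - 1) * w1 * (X - Y) * Y" by (simp add: RH_def RHm_def)
lemma RH_2232: "RH q z w1 w2 s X Y 2 2 3 2 = 0" by (simp add: RH_def RHm_def)
lemma RH_2233: "RH q z w1 w2 s X Y 2 2 3 3 = 0" by (simp add: RH_def RHm_def)
lemma RH_2311: "RH q z w1 w2 s X Y 2 3 1 1 = 0" by (simp add: RH_def RHm_def)
lemma RH_2312: "RH q z w1 w2 s X Y 2 3 1 2 = 0" by (simp add: RH_def RHm_def)
lemma RH_2313: "RH q z w1 w2 s X Y 2 3 1 3 = 0" by (simp add: RH_def RHm_def)
lemma RH_2321: "RH q z w1 w2 s X Y 2 3 2 1 = 0" by (simp add: RH_def RHm_def)
lemma RH_2322: "RH q z w1 w2 s X Y 2 3 2 2 = 0" by (simp add: RH_def RHm_def)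
lemma RH_2323: "RH q z w1 w2 s X Y 2 3 2 3 = q * (X - Y) * (X - z*Y)" by (simp add: RH_def RHm_def)
lemma RH_2331: "RH q z w1 w2 s X Y 2 3 3 1 = 0" by (simp add: RH_def RHm_def)
lemma RH_2332: "RH q z w1 w2 s X Y 2 3 3 2 = (1 - q^2) * (X - z*Y) * Y" by (simp add: RH_def RHm_def)
lemma RH_2333: "RH q z w1 w2 s X Y 2 3 3 3 = 0" by (simp add: RH_def RHm_def)
lemma RH_3111: "RH q z w1 w2 s X Y 3 1 1 1 = 0" by (simp add: RH_def RHm_def)
lemma RH_3112: "RH q z w1 w2 s X Y 3 1 1 2 = 0" by (simp add: RH_def RHm_def)
lemma RH_3113: "RH q z w1 w2 s X Y 3 1 1 3 = X * (q^2 - 1) * ((X - Y) * s^2 - (X - z*Y))" by (simp add: RH_def RHm_def)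
lemma RH_3121: "RH q z w1 w2 s X Y 3 1 2 1 = 0" by (simp add: RH_def RHm_def)
lemma RH_3122: "RH q z w1 w2 s X Y 3 1 2 2 = X * (q^2 - 1) * (X - Y) * s" by (simp add: RH_def RHm_def)
lemma RH_3123: "RH q z w1 w2 s X Y 3 1 2 3 = 0" by (simp add: RH_def RHm_def)
lemma RH_3131: "RH q z w1 w2 s X Y 3 1 3 1 = (X - Y) * ((X - z*Y) + X * (q^2 - 1))" by (simp add: RH_def RHm_def)
lemma RH_3132: "RH q z w1 w2 s X Y 3 1 3 2 = 0" by (simp add: RH_def RHm_def)
lemma RH_3133: "RH q z w1 w2 s X Y 3 1 3 3 = 0" by (simp add: RH_def RHm_def)
lemma RH_3211: "RH q z w1 w2 s X Y 3 2 1 1 = 0" by (simp add: RH_def RHm_def)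
lemma RH_3212: "RH q z w1 w2 s X Y 3 2 1 2 = 0" by (simp add: RH_def RHm_def)
lemma RH_3213: "RH q z w1 w2 s X Y 3 2 1 3 = 0" by (simp add: RH_def RHm_def)
lemma RH_3221: "RH q z w1 w2 s X Y 3 2 2 1 = 0" by (simp add: RH_def RHm_def)
lemma RH_3222: "RH q z w1 w2 s X Y 3 2 2 2 = 0" by (simp add: RH_def RHm_def)
lemma RH_3223: "RH q z w1 w2 s X Y 3 2 2 3 = X * (1 - q^2) * (X - z*Y)" by (simp add: RH_def RHm_def)
lemma RH_3231: "RH q z w1 w2 s X Y 3 2 3 1 = 0" by (simp add: RH_def RHm_def)
lemma RH_3232: "RH q z w1 w2 s X Y 3 2 3 2 = q * (X - Y) * (X - z*Y)" by (simp add: RH_def RHm_def)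
lemma RH_3233: "RH q z w1 w2 s X Y 3 2 3 3 = 0" by (simp add: RH_def RHm_def)
lemma RH_3311: "RH q z w1 w2 s X Y 3 3 1 1 = 0" by (simp add: RH_def RHm_def)
lemma RH_3312: "RH q z w1 w2 s X Y 3 3 1 2 = 0" by (simp add: RH_def RHm_def)
lemma RH_3313: "RH q z w1 w2 s X Y 3 3 1 3 = 0" by (simp add: RH_def RHm_def)
lemma RH_3321: "RH q z w1 w2 s X Y 3 3 2 1 = 0" by (simp add: RH_def RHm_def)
lemma RH_3322: "RH q z w1 w2 s X Y 3 3 2 2 = 0" by (simp add: RH_def RHm_def)
lemma RH_3323: "RH q z w1 w2 s X Y 3 3 2 3 = 0" by (simp add: RH_def RHm_def)
lemma RH_3331: "RH q z w1 w2 s X Y 3 3 3 1 = 0" by (simp add: RH_def RHm_def)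
lemma RH_3332: "RH q z w1 w2 s X Y 3 3 3 2 = 0" by (simp add: RH_def RHm_def)
lemma RH_3333: "RH q z w1 w2 s X Y 3 3 3 3 = (X - z*Y) * (X - q^2*Y)" by (simp add: RH_def RHm_def)
lemmas RH_tab = RH_1111 RH_1112 RH_1113 RH_1121 RH_1122 RH_1123 RH_1131 RH_1132 RH_1133 RH_1211 RH_1212 RH_1213 RH_1221 RH_1222 RH_1223 RH_1231 RH_1232 RH_1233 RH_1311 RH_1312 RH_1313 RH_1321 RH_1322 RH_1323 RH_1331 RH_1332 RH_1333 RH_2111 RH_2112 RH_2113 RH_2121 RH_2122 RH_2123 RH_2131 RH_2132 RH_2133 RH_2211 RH_2212 RH_2213 RH_2221 RH_2222 RH_2223 RH_2231 RH_2232 RH_2233 RH_2311 RH_2312 RH_2313 RH_2321 RH_2322 RH_2323 RH_2331 RH_2332 RH_2333 RH_3111 RH_3112 RH_3113 RH_3121 RH_3122 RH_3123 RH_3131 RH_3132 RH_3133 RH_3211 RH_3212 RH_3213 RH_3221 RH_3222 RH_3223 RH_3231 RH_3232 RH_3233 RH_3311 RH_3312 RH_3313 RH_3321 RH_3322 RH_3323 RH_3331 RH_3332 RH_3333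

lemma sum3: "(\<Sum>g\<in>{1,2,3::nat}. f g) = f 1 + f 2 + f 3" by (simp add: add.assoc)
lemma ball3: "(\<forall>g\<in>{1,2,3::nat}. P g) = (P 1 \<and> P 2 \<and> P 3)" by simp

lemma ybe_A:
  fixes s X Y :: complex
  shows "\<forall>a\<in>{1,2,3}. \<forall>a'\<in>{1,2,3}. \<forall>i\<in>{1,2,3}. \<forall>b\<in>{1,2,3}. \<forall>b'\<in>{1,2,3}. \<forall>k\<in>{1,2,3}.
    (\<Sum>g\<in>{1,2,3}. \<Sum>g'\<in>{1,2,3}. \<Sum>j\<in>{1,2,3}. RH (s^2) (s^2) s 1 s X Y a a' g g' * RH (s^2) (s^2) s 1 s X 1 g i b j * RH (s^2) (s^2) s 1 s Y 1 g' j b' k)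
  = (\<Sum>g\<in>{1,2,3}. \<Sum>g'\<in>{1,2,3}. \<Sum>j\<in>{1,2,3}. RH (s^2) (s^2) s 1 s Y 1 a' i g' j * RH (s^2) (s^2) s 1 s X 1 a j g k * RH (s^2) (s^2) s 1 s X Y g g' b b')"
  unfolding ball3 sum3
  apply (simp only: RH_tab mult_zero_left mult_zero_right add_0_left add_0_right)
  by (intro conjI; (rule refl | algebra))

lemma ybe_B:
  fixes s X Y :: complex
  shows "\<forall>a\<in>{1,2,3}. \<forall>a'\<in>{1,2,3}. \<forall>i\<in>{1,2,3}. \<forall>b\<in>{1,2,3}. \<forall>b'\<in>{1,2,3}. \<forall>k\<in>{1,2,3}.
    (\<Sum>g\<in>{1,2,3}. \<Sum>g'\<in>{1,2,3}. \<Sum>j\<in>{1,2,3}. RH (s^2) (-(s^6)) (-(s^5)) (-(s^4)) s X Y a a' g g' * RH (s^2) (-(s^6)) (-(s^5)) (-(s^4)) s X 1 g i b j * RH (s^2) (-(s^6)) (-(s^5)) (-(s^4)) s Y 1 g' j b' k)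
  = (\<Sum>g\<in>{1,2,3}. \<Sum>g'\<in>{1,2,3}. \<Sum>j\<in>{1,2,3}. RH (s^2) (-(s^6)) (-(s^5)) (-(s^4)) s Y 1 a' i g' j * RH (s^2) (-(s^6)) (-(s^5)) (-(s^4)) s X 1 a j g k * RH (s^2) (-(s^6)) (-(s^5)) (-(s^4)) s X Y g g' b b')"
  unfolding ball3 sum3
  apply (simp only: RH_tab mult_zero_left mult_zero_right add_0_left add_0_right)
  by (intro conjI; (rule refl | algebra))

lemma Rmat_RHm:
  assumes "s \<noteq> 0"
  shows "Rmat q s z l r c = RHm q z (z/s) (z/s^2) s (exp (2*l)) 1 r c"
  using assms
  unfolding Rmat_def RHm_def wa_def wb_def wc_def wcb_def wd_def Let_def
  by (simp add: power_int_def field_simps power2_eq_square)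

lemma Rloc_RH:
  assumes "s \<noteq> 0"
  shows "Rloc q s z l a i b j = RH q z (z/s) (z/s^2) s (exp (2*l)) 1 a i b j"
  using Rmat_RHm[OF assms] by (simp add: Rloc_def RH_def)

lemma RHm_hom:
  assumes "Y \<noteq> 0"
  shows "RHm q z w1 w2 s (X/Y) 1 r c = RHm q z w1 w2 s X Y r c / Y^2"
  using assms unfolding RHm_def
  by (simp add: field_simps power2_eq_square)

lemma RH_hom:
  assumes "Y \<noteq> 0"
  shows "RH q z w1 w2 s (X/Y) 1 a i b j = RH q z w1 w2 s X Y a i b j / Y^2"
  using RHm_hom[OF assms] by (simp add: RH_def)

lemma ybe_loc:
  assumes s0: "s \<noteq> 0" and sq: "s^2 = q" and zc: "z = q \<or> z = -(q^3)"
    and ha: "a\<in>{1,2,3}" "a'\<in>{1,2,3}" "i\<in>{1,2,3}" "b\<in>{1,2,3}" "b'\<in>{1,2,3}" "k\<in>{1,2,3}"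
  shows "(\<Sum>g\<in>{1,2,3}. \<Sum>g'\<in>{1,2,3}. \<Sum>j\<in>{1,2,3}. Rloc q s z (l-m) a a' g g' * Rloc q s z (l-n) g i b j * Rloc q s z (m-n) g' j b' k)
       = (\<Sum>g\<in>{1,2,3}. \<Sum>g'\<in>{1,2,3}. \<Sum>j\<in>{1,2,3}. Rloc q s z (m-n) a' i g' j * Rloc q s z (l-n) a j g k * Rloc q s z (l-m) g g' b b')"
proof -
  define X where "X = exp (2*(l-n))"
  define Y where "Y = exp (2*(m-n))"
  define w1 where "w1 = z/s"
  define w2 where "w2 = z/s^2"
  have Y0: "Y \<noteq> 0" by (simp add: Y_def)
  have e: "exp (2*(l-m)) = X/Y"
    by (simp add: X_def Y_def exp_diff[symmetric] algebra_simps)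
  have key: "(\<Sum>g\<in>{1,2,3}. \<Sum>g'\<in>{1,2,3}. \<Sum>j\<in>{1,2,3}. RH q z w1 w2 s X Y a a' g g' * RH q z w1 w2 s X 1 g i b j * RH q z w1 w2 s Y 1 g' j b' k)
       = (\<Sum>g\<in>{1,2,3}. \<Sum>g'\<in>{1,2,3}. \<Sum>j\<in>{1,2,3}. RH q z w1 w2 s Y 1 a' i g' j * RH q z w1 w2 s X 1 a j g k * RH q z w1 w2 s X Y g g' b b')"
    using zc
  proof
    assume "z = q"
    then have h: "q = s^2" "z = s^2" "w1 = s" "w2 = 1" using sq s0
      by (auto simp: w1_def w2_def power2_eq_square)
    show ?thesis unfolding h by (rule ybe_A[rule_format, OF ha])
  next
    assume "z = -(q^3)"
    then have h: "q = s^2" "z = -(s^6)" "w1 = -(s^5)" "w2 = -(s^4)" using sq s0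
      by (auto simp: w1_def w2_def field_simps eval_nat_numeral)
    show ?thesis unfolding h by (rule ybe_B[rule_format, OF ha])
  qed
  have L: "(\<Sum>g\<in>{1,2,3}. \<Sum>g'\<in>{1,2,3}. \<Sum>j\<in>{1,2,3}. Rloc q s z (l-m) a a' g g' * Rloc q s z (l-n) g i b j * Rloc q s z (m-n) g' j b' k)
     = (\<Sum>g\<in>{1,2,3}. \<Sum>g'\<in>{1,2,3}. \<Sum>j\<in>{1,2,3}. RH q z w1 w2 s X Y a a' g g' * RH q z w1 w2 s X 1 g i b j * RH q z w1 w2 s Y 1 g' j b' k) / Y^2"
    unfolding Rloc_RH[OF s0] e RH_hom[OF Y0] w1_def[symmetric] w2_def[symmetric] X_def[symmetric] Y_def[symmetric]
    by (simp only: sum_divide_distrib times_divide_eq_left times_divide_eq_right)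
  have R: "(\<Sum>g\<in>{1,2,3}. \<Sum>g'\<in>{1,2,3}. \<Sum>j\<in>{1,2,3}. Rloc q s z (m-n) a' i g' j * Rloc q s z (l-n) a j g k * Rloc q s z (l-m) g g' b b')
     = (\<Sum>g\<in>{1,2,3}. \<Sum>g'\<in>{1,2,3}. \<Sum>j\<in>{1,2,3}. RH q z w1 w2 s Y 1 a' i g' j * RH q z w1 w2 s X 1 a j g k * RH q z w1 w2 s X Y g g' b b') / Y^2"
    unfolding Rloc_RH[OF s0] e RH_hom[OF Y0] w1_def[symmetric] w2_def[symmetric] X_def[symmetric] Y_def[symmetric]
    by (simp only: sum_divide_distrib times_divide_eq_left times_divide_eq_right)
  show ?thesis unfolding L R key ..
qed

lemma states_0: "states 0 = {[]}"
  by (auto simp: states_def)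

lemma states_Suc: "states (Suc n) = (\<lambda>(j, js). j # js) ` ({1,2,3} \<times> states n)"
proof
  show "states (Suc n) \<subseteq> (\<lambda>(j, js). j # js) ` ({1,2,3} \<times> states n)"
  proof
    fix xs assume "xs \<in> states (Suc n)"
    then obtain j js where "xs = j # js" "j \<in> {1,2,3}" "js \<in> states n"
      by (cases xs) (auto simp: states_def)
    then show "xs \<in> (\<lambda>(j, js). j # js) ` ({1,2,3} \<times> states n)" by force
  qed
  show "(\<lambda>(j, js). j # js) ` ({1,2,3} \<times> states n) \<subseteq> states (Suc n)"
    by (auto simp: states_def)
qed

lemma sum_states_Suc:
  "(\<Sum>js\<in>states (Suc n). f js) = (\<Sum>j\<in>{1,2,3}. \<Sum>js\<in>states n. f (j # js))"
proof -
  have inj: "inj_on (\<lambda>(j, js). j # js) ({1,2,3::nat} \<times> states n)"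
    by (auto simp: inj_on_def)
  have "(\<Sum>js\<in>states (Suc n). f js) = (\<Sum>p\<in>{1,2,3} \<times> states n. f ((\<lambda>(j, js). j # js) p))"
    unfolding states_Suc by (rule sum.reindex[OF inj, unfolded comp_def])
  also have "\<dots> = (\<Sum>j\<in>{1,2,3}. \<Sum>js\<in>states n. f (j # js))"
    by (simp add: sum.cartesian_product split_def)
  finally show ?thesis .
qed

definition PP where
  "PP q s z mus l m a a' b b' iss ks =
     (\<Sum>js\<in>states (length mus). Tmono q s z l mus a b iss js * Tmono q s z m mus a' b' js ks)"

lemma PP_Nil: "PP q s z [] l m a a' b b' iss ks =
   (if a = b \<and> a' = b' \<and> iss = [] \<and> ks = [] then 1 else 0)"
  by (simp add: PP_def states_0)

lemma PP_Cons_Nil1: "PP q s z (\<mu> # mus) l m a a' b b' [] ks = 0"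
  by (simp add: PP_def)

lemma Tmono_Nil2: "Tmono q s z l (\<mu> # mus) a b iss [] = 0"
  by (cases iss) auto

lemma PP_Cons_Nil2: "PP q s z (\<mu> # mus) l m a a' b b' iss [] = 0"
  by (simp add: PP_def Tmono_Nil2)

lemma PP_Cons: "PP q s z (\<mu> # mus) l m a a' b b' (i # iss) (k # ks) =
  (\<Sum>d\<in>{1,2,3}. \<Sum>d'\<in>{1,2,3}. \<Sum>j\<in>{1,2,3}.
     Rloc q s z (l - \<mu>) a i d j * Rloc q s z (m - \<mu>) a' j d' k * PP q s z mus l m d d' b b' iss ks)"
  unfolding PP_def
  by (simp add: sum_states_Suc sum3 sum.distrib sum_distrib_left sum_distrib_right algebra_simps)
lemma rearr1:
  fixes c f h P :: "nat \<Rightarrow> nat \<Rightarrow> complex" and f3 h3 :: "nat \<Rightarrow> nat \<Rightarrow> nat \<Rightarrow> complex"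
  shows "(\<Sum>g\<in>{1,2,3::nat}. \<Sum>g'\<in>{1,2,3::nat}. c g g' * (\<Sum>d\<in>{1,2,3::nat}. \<Sum>d'\<in>{1,2,3::nat}. \<Sum>j\<in>{1,2,3::nat}. f3 g d j * h3 g' j d' * P d d'))
   = (\<Sum>d\<in>{1,2,3}. \<Sum>d'\<in>{1,2,3}. (\<Sum>g\<in>{1,2,3}. \<Sum>g'\<in>{1,2,3}. \<Sum>j\<in>{1,2,3}. c g g' * f3 g d j * h3 g' j d') * P d d')"
  unfolding sum3 by algebra

lemma rearr2:
  fixes u v P :: "nat \<Rightarrow> nat \<Rightarrow> complex" and c :: "nat \<Rightarrow> nat \<Rightarrow> nat \<Rightarrow> nat \<Rightarrow> complex"
  shows "(\<Sum>d\<in>{1,2,3::nat}. \<Sum>d'\<in>{1,2,3::nat}. (\<Sum>g\<in>{1,2,3::nat}. \<Sum>g'\<in>{1,2,3::nat}. \<Sum>j\<in>{1,2,3::nat}. u g' j * v j g * c g g' d d') * P d d')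
   = (\<Sum>g\<in>{1,2,3}. \<Sum>g'\<in>{1,2,3}. \<Sum>j\<in>{1,2,3}. u g' j * v j g * (\<Sum>d\<in>{1,2,3}. \<Sum>d'\<in>{1,2,3}. c g g' d d' * P d d'))"
  unfolding sum3 by algebra

lemma rearr3:
  fixes u v w :: "nat \<Rightarrow> nat \<Rightarrow> complex" and Q :: "nat \<Rightarrow> nat \<Rightarrow> nat \<Rightarrow> nat \<Rightarrow> complex"
  shows "(\<Sum>g\<in>{1,2,3::nat}. \<Sum>g'\<in>{1,2,3::nat}. \<Sum>j\<in>{1,2,3::nat}. u g' j * v j g * (\<Sum>d\<in>{1,2,3::nat}. \<Sum>d'\<in>{1,2,3::nat}. Q g' g d' d * w d d'))
   = (\<Sum>g\<in>{1,2,3}. \<Sum>g'\<in>{1,2,3}. (\<Sum>d\<in>{1,2,3}. \<Sum>d'\<in>{1,2,3}. \<Sum>j\<in>{1,2,3}. u d j * v j d' * Q d d' g' g) * w g g')"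
  unfolding sum3 by algebra

lemma rtt:
  assumes s0: "s \<noteq> 0" and sq: "s^2 = q" and zc: "z = q \<or> z = -(q^3)"
    and hb: "b \<in> {1,2,3}" "b' \<in> {1,2,3}"
  shows "a \<in> {1,2,3} \<Longrightarrow> a' \<in> {1,2,3} \<Longrightarrow> set iss \<subseteq> {1,2,3} \<Longrightarrow> set ks \<subseteq> {1,2,3} \<Longrightarrow>
   (\<Sum>g\<in>{1,2,3}. \<Sum>g'\<in>{1,2,3}. Rloc q s z (l-m) a a' g g' * PP q s z mus l m g g' b b' iss ks)
 = (\<Sum>g\<in>{1,2,3}. \<Sum>g'\<in>{1,2,3}. PP q s z mus m l a' a g' g iss ks * Rloc q s z (l-m) g g' b b')"
proof (induction mus arbitrary: a a' iss ks)
  case Nil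
  show ?case
  proof (cases "iss = [] \<and> ks = []")
    case True
    then have P1: "\<And>g g'. PP q s z [] l m g g' b b' iss ks = (if g = b \<and> g' = b' then 1 else 0)"
      and P2: "\<And>g g'. PP q s z [] m l a' a g' g iss ks = (if a' = g' \<and> a = g then 1 else 0)"
      by (simp_all add: PP_Nil)
    have L: "(\<Sum>g\<in>{1,2,3}. \<Sum>g'\<in>{1,2,3}. Rloc q s z (l-m) a a' g g' * PP q s z [] l m g g' b b' iss ks) = Rloc q s z (l-m) a a' b b'"
      unfolding P1 sum3 using hb by auto
    have R: "(\<Sum>g\<in>{1,2,3}. \<Sum>g'\<in>{1,2,3}. PP q s z [] m l a' a g' g iss ks * Rloc q s z (l-m) g g' b b') = Rloc q s z (l-m) a a' b b'"
      unfolding P2 sum3 using Nil.prems(1,2) by auto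
    show ?thesis using L R by simp
  next
    case False
    then have "\<And>g g' a a' b b' l m. PP q s z [] l m g g' b b' iss ks = 0" by (auto simp: PP_Nil)
    then show ?thesis by simp
  qed
next
  case (Cons \<mu> mus)
  show ?case
  proof (cases iss)
    case Nil
    then show ?thesis by (simp add: PP_Cons_Nil1)
  next
    case (Cons i is1)
    note iss = this
    show ?thesis
    proof (cases ks)
      case Nil
      then show ?thesis by (simp add: PP_Cons_Nil2)
    next
      case (Cons k ks1)
      have hi: "i \<in> {1,2,3}" "set is1 \<subseteq> {1,2,3}" using Cons.prems(3) iss by auto
      have hk: "k \<in> {1,2,3}" "set ks1 \<subseteq> {1,2,3}" using Cons.prems(4) Cons by auto
      let ?R0 = "Rloc q s z (l-m)"
      let ?R1 = "Rloc q s z (l-\<mu>)"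
      let ?R2 = "Rloc q s z (m-\<mu>)"
      have "(\<Sum>g\<in>{1,2,3}. \<Sum>g'\<in>{1,2,3}. ?R0 a a' g g' * PP q s z (\<mu> # mus) l m g g' b b' iss ks)
        = (\<Sum>g\<in>{1,2,3}. \<Sum>g'\<in>{1,2,3}. ?R0 a a' g g' * (\<Sum>d\<in>{1,2,3}. \<Sum>d'\<in>{1,2,3}. \<Sum>j\<in>{1,2,3}.
            ?R1 g i d j * ?R2 g' j d' k * PP q s z mus l m d d' b b' is1 ks1))"
        by (simp only: iss Cons PP_Cons)
      also have "\<dots> = (\<Sum>d\<in>{1,2,3}. \<Sum>d'\<in>{1,2,3}. (\<Sum>g\<in>{1,2,3}. \<Sum>g'\<in>{1,2,3}. \<Sum>j\<in>{1,2,3}.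
            ?R0 a a' g g' * ?R1 g i d j * ?R2 g' j d' k) * PP q s z mus l m d d' b b' is1 ks1)"
        by (rule rearr1)
      also have "\<dots> = (\<Sum>d\<in>{1,2,3}. \<Sum>d'\<in>{1,2,3}. (\<Sum>g\<in>{1,2,3}. \<Sum>g'\<in>{1,2,3}. \<Sum>j\<in>{1,2,3}.
            ?R2 a' i g' j * ?R1 a j g k * ?R0 g g' d d') * PP q s z mus l m d d' b b' is1 ks1)"
      proof (intro sum.cong refl)
        fix d d' assume d: "d \<in> {1,2,3::nat}" and d': "d' \<in> {1,2,3::nat}"
        then show "(\<Sum>g\<in>{1,2,3}. \<Sum>g'\<in>{1,2,3}. \<Sum>j\<in>{1,2,3}. ?R0 a a' g g' * ?R1 g i d j * ?R2 g' j d' k) * PP q s z mus l m d d' b b' is1 ks1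
          = (\<Sum>g\<in>{1,2,3}. \<Sum>g'\<in>{1,2,3}. \<Sum>j\<in>{1,2,3}. ?R2 a' i g' j * ?R1 a j g k * ?R0 g g' d d') * PP q s z mus l m d d' b b' is1 ks1"
          by (simp only: ybe_loc[OF s0 sq zc Cons.prems(1,2) hi(1) d d' hk(1), of l m \<mu>])
      qed
      also have "\<dots> = (\<Sum>g\<in>{1,2,3}. \<Sum>g'\<in>{1,2,3}. \<Sum>j\<in>{1,2,3}. ?R2 a' i g' j * ?R1 a j g k *
            (\<Sum>d\<in>{1,2,3}. \<Sum>d'\<in>{1,2,3}. ?R0 g g' d d' * PP q s z mus l m d d' b b' is1 ks1))"
        by (rule rearr2)
      also have "\<dots> = (\<Sum>g\<in>{1,2,3}. \<Sum>g'\<in>{1,2,3}. \<Sum>j\<in>{1,2,3}. ?R2 a' i g' j * ?R1 a j g k *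
            (\<Sum>d\<in>{1,2,3}. \<Sum>d'\<in>{1,2,3}. PP q s z mus m l g' g d' d is1 ks1 * ?R0 d d' b b'))"
        apply (intro sum.cong refl)
        apply (rule arg_cong2[where f = "(*)"], rule refl)
        apply (rule Cons.IH[OF _ _ hi(2) hk(2)])
        apply auto
        done
      also have "\<dots> = (\<Sum>g\<in>{1,2,3}. \<Sum>g'\<in>{1,2,3}. (\<Sum>d\<in>{1,2,3}. \<Sum>d'\<in>{1,2,3}. \<Sum>j\<in>{1,2,3}.
            ?R2 a' i d j * ?R1 a j d' k * PP q s z mus m l d d' g' g is1 ks1) * ?R0 g g' b b')"
        by (rule rearr3)
      also have "\<dots> = (\<Sum>g\<in>{1,2,3}. \<Sum>g'\<in>{1,2,3}. PP q s z (\<mu> # mus) m l a' a g' g iss ks * ?R0 g g' b b')"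
        by (simp only: iss Cons PP_Cons)
      finally show ?thesis .
    qed
  qed
qed

lemma cont_if_const [continuous_intros]:
  "continuous_on S f \<Longrightarrow> continuous_on S g \<Longrightarrow> continuous_on S (\<lambda>x. if P then f x else g x)"
  by (cases P) auto

lemma cont_Rloc: "continuous_on UNIV (\<lambda>l. Rloc q s z l a i b j)"
  unfolding Rloc_def Rmat_def wa_def wb_def wc_def wcb_def wd_def Let_def
  by (intro continuous_intros)

lemma cont_Tmono: "continuous_on UNIV (\<lambda>l. Tmono q s z l mus a b iss js)"
proof (induction mus arbitrary: a iss js)
  case Nil
  then show ?case by simp
next
  case (Cons \<mu> mus)
  show ?case
  proof (cases iss)
    case Nil
    then show ?thesis by simp
  next
    case (Cons i is1)
    show ?thesis
    proof (cases js)
      case Nil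
      then show ?thesis by (simp add: Tmono_Nil2)
    next
      case (Cons j js1)
      have cd: "continuous_on UNIV (\<lambda>l::complex. l - \<mu>)" by (intro continuous_intros)
      have c1: "continuous_on UNIV (\<lambda>l. Rloc q s z (l - \<mu>) a i g j)" for g
        by (rule continuous_on_compose2[OF cont_Rloc[of q s z a i g j] cd]) auto
      show ?thesis unfolding \<open>iss = i # is1\<close> Cons Tmono.simps
        by (intro continuous_on_sum continuous_on_mult c1 Cons.IH)
    qed
  qed
qed

lemma cont_PP1: "continuous_on UNIV (\<lambda>l. PP q s z mus l m a a' b b' iss ks)"
  unfolding PP_def by (intro continuous_on_sum continuous_on_mult cont_Tmono continuous_on_const)

lemma cont_PP2: "continuous_on UNIV (\<lambda>l. PP q s z mus m l a a' b b' iss ks)"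
  unfolding PP_def by (intro continuous_on_sum continuous_on_mult cont_Tmono continuous_on_const)

lemma zero_by_cont:
  fixes F :: "complex \<Rightarrow> complex"
  assumes cont: "continuous_on UNIV F"
    and h: "\<And>l. (exp (2*(l - m)) - c1) * (exp (2*(l - m)) - c2) * F l = 0"
  shows "F l0 = 0"
proof -
  define g where "g t = F (l0 + of_real t)" for t :: real
  have gc: "continuous_on UNIV g"
    unfolding g_def
    by (rule continuous_on_compose2[OF cont]) (auto intro!: continuous_intros)
  then have lim1: "(g \<longlongrightarrow> g 0) (at 0)"
    by (simp add: continuous_on_eq_continuous_at isCont_def)
  define W where "W = exp (2*(l0 - m))"
  have W0: "W \<noteq> 0" by (simp add: W_def)
  define t1 where "t1 = ln (Re (c1 / W)) / 2"
  define t2 where "t2 = ln (Re (c2 / W)) / 2"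
  have bad: "t = ln (Re (c / W)) / 2" if "exp (2*(l0 + of_real t - m)) = c" for t c
  proof -
    have "exp (2*(l0 + of_real t - m)) = W * of_real (exp (2*t))"
      by (simp add: W_def exp_add[symmetric] exp_of_real[symmetric] algebra_simps)
    with that have "of_real (exp (2*t)) = c / W" using W0 by (simp add: field_simps)
    then have "exp (2*t) = Re (c / W)" by (metis Re_complex_of_real)
    then have "2*t = ln (Re (c / W))" by (metis ln_exp)
    then show ?thesis by simp
  qed
  have ev: "eventually (\<lambda>t. t \<noteq> t1 \<and> t \<noteq> t2) (at (0::real))"
    by (intro eventually_conj eventually_neq_at_within)
  have ev2: "eventually (\<lambda>t. g t = 0) (at (0::real))"
    using ev
  proof (rule eventually_mono)
    fix t assume t: "t \<noteq> t1 \<and> t \<noteq> t2"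
    have n1: "exp (2*(l0 + of_real t - m)) - c1 \<noteq> 0"
      using bad[of t c1] t by (auto simp: t1_def)
    have n2: "exp (2*(l0 + of_real t - m)) - c2 \<noteq> 0"
      using bad[of t c2] t by (auto simp: t2_def)
    have "(exp (2*(l0 + of_real t - m)) - c1) * (exp (2*(l0 + of_real t - m)) - c2) * F (l0 + of_real t) = 0"
      by (rule h)
    with n1 n2 show "g t = 0" by (simp add: g_def)
  qed
  then have lim2: "(g \<longlongrightarrow> 0) (at 0)" by (rule tendsto_eventually)
  have "g 0 = 0" using tendsto_unique[OF at_neq_bot lim1 lim2] .
  then show ?thesis by (simp add: g_def)
qed

lemma Rloc_11: "g \<in> {1,2,3} \<Longrightarrow> g' \<in> {1,2,3} \<Longrightarrow>
  Rloc q s z t 1 1 g g' = (if g = 1 \<and> g' = 1 then wa q z t else 0)"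
  by (auto simp: Rloc_def Rmat_def)

lemma Rloc_33: "g \<in> {1,2,3} \<Longrightarrow> g' \<in> {1,2,3} \<Longrightarrow>
  Rloc q s z t g g' 3 3 = (if g = 3 \<and> g' = 3 then wa q z t else 0)"
  by (auto simp: Rloc_def Rmat_def)

lemma PP_comm:
  assumes s0: "s \<noteq> 0" and sq: "s^2 = q" and zc: "z = q \<or> z = -(q^3)"
    and hi: "set iss \<subseteq> {1,2,3}" and hk: "set ks \<subseteq> {1,2,3}"
  shows "PP q s z mus l m 1 1 3 3 iss ks = PP q s z mus m l 1 1 3 3 iss ks"
proof -
  define F where "F l = PP q s z mus l m 1 1 3 3 iss ks - PP q s z mus m l 1 1 3 3 iss ks" for l
  have "(exp (2*(l - m)) - z) * (exp (2*(l - m)) - q^2) * F l = 0" for l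
  proof -
    have r: "(\<Sum>g\<in>{1,2,3}. \<Sum>g'\<in>{1,2,3}. Rloc q s z (l-m) 1 1 g g' * PP q s z mus l m g g' 3 3 iss ks)
     = (\<Sum>g\<in>{1,2,3}. \<Sum>g'\<in>{1,2,3}. PP q s z mus m l 1 1 g' g iss ks * Rloc q s z (l-m) g g' 3 3)"
      by (rule rtt[OF s0 sq zc _ _ _ _ hi hk]) auto
    have "wa q z (l-m) * PP q s z mus l m 1 1 3 3 iss ks = PP q s z mus m l 1 1 3 3 iss ks * wa q z (l-m)"
      using r by (simp add: sum3 Rloc_def Rmat_def)
    then show ?thesis by (simp add: F_def wa_def Let_def algebra_simps)
  qed
  moreover have "continuous_on UNIV F"
    unfolding F_def by (intro continuous_on_diff cont_PP1 cont_PP2)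
  ultimately have "F l = 0" using zero_by_cont by blast
  then show ?thesis by (simp add: F_def)
qed

lemma Rloc_col11: "a \<in> {1,2,3} \<Longrightarrow> i \<in> {1,2,3} \<Longrightarrow>
  Rloc q s z t a i 1 1 = (if a = 1 \<and> i = 1 then wa q z t else 0)"
  by (auto simp: Rloc_def Rmat_def)

lemma Rloc_col33: "a \<in> {1,2,3} \<Longrightarrow> i \<in> {1,2,3} \<Longrightarrow>
  Rloc q s z t a i 3 3 = (if a = 3 \<and> i = 3 then wa q z t else 0)"
  by (auto simp: Rloc_def Rmat_def)

lemma w0_lemmas:
  "wc q z 0 = wa q z 0" "wd q s z 1 3 0 = wa q z 0" "wb q z 0 = 0"
  "wd q s z 2 3 0 = 0" "wd q s z 3 3 0 = 0" "wd q s z (Suc 0) 3 0 = wa q z 0"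
  by (simp_all add: wa_def wb_def wc_def wd_def Let_def algebra_simps)

lemma Tmono_app:
  "length i1 = length m1 \<Longrightarrow> length j1 = length m1 \<Longrightarrow> a \<in> {1,2,3} \<Longrightarrow>
   Tmono q s z l (m1 @ m2) a b (i1 @ i2) (j1 @ j2) =
   (\<Sum>g\<in>{1,2,3}. Tmono q s z l m1 a g i1 j1 * Tmono q s z l m2 g b i2 j2)"
proof (induction m1 arbitrary: a i1 j1)
  case Nil
  then show ?case by (auto simp: sum3)
next
  case (Cons \<mu> m1)
  from Cons.prems obtain i i1' j j1' where ij: "i1 = i # i1'" "j1 = j # j1'"
    "length i1' = length m1" "length j1' = length m1"
    by (cases i1; cases j1) auto
  have "Tmono q s z l ((\<mu> # m1) @ m2) a b (i1 @ i2) (j1 @ j2)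
      = (\<Sum>d\<in>{1,2,3}. Rloc q s z (l - \<mu>) a i d j * Tmono q s z l (m1 @ m2) d b (i1' @ i2) (j1' @ j2))"
    by (simp add: ij)
  also have "\<dots> = (\<Sum>d\<in>{1,2,3}. Rloc q s z (l - \<mu>) a i d j *
      (\<Sum>g\<in>{1,2,3}. Tmono q s z l m1 d g i1' j1' * Tmono q s z l m2 g b i2 j2))"
    by (intro sum.cong refl arg_cong2[where f = "(*)"] Cons.IH) (auto simp: ij)
  also have "\<dots> = (\<Sum>g\<in>{1,2,3}. (\<Sum>d\<in>{1,2,3}. Rloc q s z (l - \<mu>) a i d j * Tmono q s z l m1 d g i1' j1') *
      Tmono q s z l m2 g b i2 j2)"
    unfolding sum3 by algebra
  also have "\<dots> = (\<Sum>g\<in>{1,2,3}. Tmono q s z l (\<mu> # m1) a g i1 j1 * Tmono q s z l m2 g b i2 j2)"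
    by (simp add: ij)
  finally show ?case .
qed

lemma left_frozen:
  "length iss = length m \<Longrightarrow> set iss \<subseteq> {1,2,3} \<Longrightarrow> a \<in> {1,2,3} \<Longrightarrow>
   Tmono q s z l m a 1 iss (replicate (length m) 1) =
   (if a = 1 \<and> iss = replicate (length m) 1 then prod_list (map (\<lambda>\<mu>. wa q z (l - \<mu>)) m) else 0)"
proof (induction m arbitrary: a iss)
  case Nil
  then show ?case by auto
next
  case (Cons \<mu> m)
  from Cons.prems obtain i is1 where ii: "iss = i # is1" "length is1 = length m" "i \<in> {1,2,3}" "set is1 \<subseteq> {1,2,3}"
    by (cases iss) auto
  have "Tmono q s z l (\<mu> # m) a 1 iss (replicate (length (\<mu> # m)) 1)
     = (\<Sum>d\<in>{1,2,3}. Rloc q s z (l - \<mu>) a i d 1 * Tmono q s z l m d 1 is1 (replicate (length m) 1))"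
    by (simp add: ii)
  also have "\<dots> = (\<Sum>d\<in>{1,2,3}. Rloc q s z (l - \<mu>) a i d 1 *
     (if d = 1 \<and> is1 = replicate (length m) 1 then prod_list (map (\<lambda>\<mu>. wa q z (l - \<mu>)) m) else 0))"
    by (intro sum.cong refl arg_cong2[where f = "(*)"] Cons.IH) (use ii in auto)
  also have "\<dots> = Rloc q s z (l - \<mu>) a i 1 1 * (if is1 = replicate (length m) 1 then prod_list (map (\<lambda>\<mu>. wa q z (l - \<mu>)) m) else 0)"
    by (simp add: sum3)
  also have "\<dots> = (if a = 1 \<and> iss = replicate (length (\<mu> # m)) 1 then prod_list (map (\<lambda>\<mu>. wa q z (l - \<mu>)) (\<mu> # m)) else 0)"
    unfolding Rloc_col11[OF Cons.prems(3) ii(3)] by (auto simp: ii)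
  finally show ?case .
qed

lemma right_frozen:
  "length iss = length m \<Longrightarrow> set iss \<subseteq> {1,2,3} \<Longrightarrow> a \<in> {1,2,3} \<Longrightarrow>
   Tmono q s z l m a 3 iss (replicate (length m) 3) =
   (if a = 3 \<and> iss = replicate (length m) 3 then prod_list (map (\<lambda>\<mu>. wa q z (l - \<mu>)) m) else 0)"
proof (induction m arbitrary: a iss)
  case Nil
  then show ?case by auto
next
  case (Cons \<mu> m)
  from Cons.prems obtain i is1 where ii: "iss = i # is1" "length is1 = length m" "i \<in> {1,2,3}" "set is1 \<subseteq> {1,2,3}"
    by (cases iss) auto
  have "Tmono q s z l (\<mu> # m) a 3 iss (replicate (length (\<mu> # m)) 3)
     = (\<Sum>d\<in>{1,2,3}. Rloc q s z (l - \<mu>) a i d 3 * Tmono q s z l m d 3 is1 (replicate (length m) 3))"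
    by (simp add: ii)
  also have "\<dots> = (\<Sum>d\<in>{1,2,3}. Rloc q s z (l - \<mu>) a i d 3 *
     (if d = 3 \<and> is1 = replicate (length m) 3 then prod_list (map (\<lambda>\<mu>. wa q z (l - \<mu>)) m) else 0))"
    by (intro sum.cong refl arg_cong2[where f = "(*)"] Cons.IH) (use ii in auto)
  also have "\<dots> = Rloc q s z (l - \<mu>) a i 3 3 * (if is1 = replicate (length m) 3 then prod_list (map (\<lambda>\<mu>. wa q z (l - \<mu>)) m) else 0)"
    by (simp add: sum3)
  also have "\<dots> = (if a = 3 \<and> iss = replicate (length (\<mu> # m)) 3 then prod_list (map (\<lambda>\<mu>. wa q z (l - \<mu>)) (\<mu> # m)) else 0)"
    unfolding Rloc_col33[OF Cons.prems(3) ii(3)] by (auto simp: ii)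
  finally show ?case .
qed

lemma R0_col1: "g \<in> {1,2,3} \<Longrightarrow> i \<in> {1,2,3} \<Longrightarrow> h \<in> {1,2,3} \<Longrightarrow>
  Rloc q s z 0 g i h 1 = (if g = 1 \<and> h = i then wa q z 0 else 0)"
proof -
  assume "g \<in> {1,2,3}" "i \<in> {1,2,3}" "h \<in> {1,2,3}"
  then have "g = 1 \<or> g = 2 \<or> g = 3" "i = 1 \<or> i = 2 \<or> i = 3" "h = 1 \<or> h = 2 \<or> h = 3" by auto
  then show ?thesis by (elim disjE; simp add: Rloc_def Rmat_def w0_lemmas)
qed
lemma prod_list_nth: "prod_list (map f xs) = (\<Prod>i<length xs. f (xs ! i))"
proof (induction xs)
  case Nil
  then show ?case by simp
next
  case (Cons x xs)
  then show ?case by (simp del: prod.lessThan_Suc add: prod.lessThan_Suc_shift)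
qed

lemma Tmono_mid:
  assumes l1: "length i1 = length m1" and l2: "length i2 = length m2"
    and hi: "i \<in> {1,2,3}" "set i1 \<subseteq> {1,2,3}" "set i2 \<subseteq> {1,2,3}"
  shows "Tmono q s z \<mu> (m1 @ \<mu> # m2) 1 3 (i1 @ i # i2) (replicate (length m1) 1 @ 1 # replicate (length m2) 3)
    = (if i1 = replicate (length m1) 1 \<and> i = 3 \<and> i2 = replicate (length m2) 3
       then prod_list (map (\<lambda>\<nu>. wa q z (\<mu> - \<nu>)) (m1 @ \<mu> # m2)) else 0)"
proof -
  let ?r1 = "replicate (length m1) (1::nat)"
  let ?r3 = "replicate (length m2) (3::nat)"
  have mid: "Tmono q s z \<mu> (\<mu> # m2) g 3 (i # i2) (1 # ?r3) =
     (if g = 1 then wa q z 0 * Tmono q s z \<mu> m2 i 3 i2 ?r3 else 0)" if g: "g \<in> {1,2,3}" for g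
  proof -
    have "Tmono q s z \<mu> (\<mu> # m2) g 3 (i # i2) (1 # ?r3) =
      (\<Sum>h\<in>{1,2,3}. Rloc q s z 0 g i h 1 * Tmono q s z \<mu> m2 h 3 i2 ?r3)" by simp
    also have "\<dots> = (\<Sum>h\<in>{1,2,3}. (if g = 1 \<and> h = i then wa q z 0 else 0) * Tmono q s z \<mu> m2 h 3 i2 ?r3)"
      by (intro sum.cong refl arg_cong2[where f = "(*)"] R0_col1 g hi(1))
    also have "\<dots> = (if g = 1 then wa q z 0 * Tmono q s z \<mu> m2 i 3 i2 ?r3 else 0)"
      using hi(1) by (auto simp: sum3)
    finally show ?thesis .
  qed
  have "Tmono q s z \<mu> (m1 @ \<mu> # m2) 1 3 (i1 @ i # i2) (?r1 @ 1 # ?r3)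
      = (\<Sum>g\<in>{1,2,3}. Tmono q s z \<mu> m1 1 g i1 ?r1 * Tmono q s z \<mu> (\<mu> # m2) g 3 (i # i2) (1 # ?r3))"
    by (rule Tmono_app) (use l1 in auto)
  also have "\<dots> = (\<Sum>g\<in>{1,2,3}. Tmono q s z \<mu> m1 1 g i1 ?r1 * (if g = 1 then wa q z 0 * Tmono q s z \<mu> m2 i 3 i2 ?r3 else 0))"
    by (intro sum.cong refl arg_cong2[where f = "(*)"] mid)
  also have "\<dots> = Tmono q s z \<mu> m1 1 1 i1 ?r1 * (wa q z 0 * Tmono q s z \<mu> m2 i 3 i2 ?r3)"
    by (simp add: sum3)
  also have "\<dots> = (if i1 = ?r1 then prod_list (map (\<lambda>\<nu>. wa q z (\<mu> - \<nu>)) m1) else 0) *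
      (wa q z 0 * (if i = 3 \<and> i2 = ?r3 then prod_list (map (\<lambda>\<nu>. wa q z (\<mu> - \<nu>)) m2) else 0))"
    using left_frozen[OF l1 hi(2), of 1 q s z \<mu>] right_frozen[OF l2 hi(3) hi(1), of q s z \<mu>] by simp
  also have "\<dots> = (if i1 = ?r1 \<and> i = 3 \<and> i2 = ?r3
       then prod_list (map (\<lambda>\<nu>. wa q z (\<mu> - \<nu>)) (m1 @ \<mu> # m2)) else 0)"
    by simp
  finally show ?thesis .
qed

lemma finite_states: "finite (states n)"
  unfolding states_def by (rule finite_lists_length_eq) simp

lemma Eop_frozen:
  assumes k: "k < length mus" and iss: "iss \<in> states (length mus)"
  shows "Eop q s z mus (mus ! k) iss (replicate (Suc k) 1 @ replicate (length mus - Suc k) 3)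
    = (if iss = replicate k 1 @ replicate (length mus - k) 3
       then prod_list (map (\<lambda>\<nu>. wa q z (mus ! k - \<nu>)) mus) else 0)"
proof -
  define m1 where "m1 = take k mus"
  define m2 where "m2 = drop (Suc k) mus"
  define i1 where "i1 = take k iss"
  define i2 where "i2 = drop (Suc k) iss"
  define i where "i = iss ! k"
  have li: "length iss = length mus" "set iss \<subseteq> {1,2,3}" using iss by (auto simp: states_def)
  have mus_eq: "mus = m1 @ (mus ! k) # m2" using k by (simp add: m1_def m2_def id_take_nth_drop)
  have iss_eq: "iss = i1 @ i # i2" using k li by (simp add: i1_def i2_def i_def id_take_nth_drop)
  have lm1: "length m1 = k" using k by (simp add: m1_def)
  have lm2: "length m2 = length mus - Suc k" by (simp add: m2_def)
  have l1: "length i1 = length m1" using k li by (simp add: i1_def lm1)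
  have l2: "length i2 = length m2" using li by (simp add: i2_def lm2)
  have hi: "i \<in> {1,2,3}" "set i1 \<subseteq> {1,2,3}" "set i2 \<subseteq> {1,2,3}"
    using li iss_eq by auto
  have js: "replicate (Suc k) 1 @ replicate (length mus - Suc k) 3 = replicate (length m1) 1 @ 1 # replicate (length m2) 3"
    by (simp add: lm1 lm2 replicate_append_same[symmetric])
  have "Eop q s z mus (mus ! k) iss (replicate (Suc k) 1 @ replicate (length mus - Suc k) 3)
     = Tmono q s z (mus ! k) (m1 @ (mus ! k) # m2) 1 3 (i1 @ i # i2) (replicate (length m1) 1 @ 1 # replicate (length m2) 3)"
    unfolding Eop_def js by (simp only: mus_eq[symmetric] iss_eq[symmetric])
  also have "\<dots> = (if i1 = replicate (length m1) 1 \<and> i = 3 \<and> i2 = replicate (length m2) 3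
       then prod_list (map (\<lambda>\<nu>. wa q z (mus ! k - \<nu>)) (m1 @ (mus ! k) # m2)) else 0)"
    by (rule Tmono_mid[OF l1 l2 hi])
  also have "(i1 = replicate (length m1) 1 \<and> i = 3 \<and> i2 = replicate (length m2) 3) \<longleftrightarrow>
       iss = replicate k 1 @ replicate (length mus - k) 3"
  proof -
    have e: "length mus - k = Suc (length m2)" using k lm2 by simp
    have "replicate (length mus - k) (3::nat) = 3 # replicate (length m2) 3"
      unfolding e by simp
    then show ?thesis
      using l1 lm1 by (simp add: iss_eq append_eq_append_conv)
  qed
  finally show ?thesis using mus_eq by metis
qed

definition dvec :: "nat list \<Rightarrow> nat list \<Rightarrow> complex" where
  "dvec w = (\<lambda>js. if js = w then 1 else 0)"

definition clean :: "nat \<Rightarrow> (nat list \<Rightarrow> complex) \<Rightarrow> nat list \<Rightarrow> complex" where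
  "clean n v = (\<lambda>js. if js \<in> states n then v js else 0)"

definition FE where
  "FE q s z mus l v = clean (length mus) (applyE q s z mus l v)"

lemma applyE_agree:
  assumes "\<forall>js\<in>states (length mus). v js = w js"
  shows "applyE q s z mus l v = applyE q s z mus l w"
  unfolding applyE_def using assms by (intro ext sum.cong refl) auto

lemma foldl_agree:
  assumes "\<forall>js\<in>states (length mus). v js = w js"
  shows "\<forall>js\<in>states (length mus). foldl (\<lambda>v l. applyE q s z mus l v) v lams js = foldl (\<lambda>v l. FE q s z mus l v) w lams js"
  using assms
proof (induction lams arbitrary: v w)
  case Nil
  then show ?case by simp
next
  case (Cons l lams)
  have "\<forall>js\<in>states (length mus). applyE q s z mus l v js = FE q s z mus l w js"
    using applyE_agree[OF Cons.prems] by (simp add: FE_def clean_def)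
  then show ?case using Cons.IH by simp
qed

lemma applyE_applyE:
  "applyE q s z mus l (applyE q s z mus m v) iss =
   (\<Sum>ks\<in>states (length mus). PP q s z mus l m 1 1 3 3 iss ks * v ks)"
proof -
  have "applyE q s z mus l (applyE q s z mus m v) iss =
    (\<Sum>js\<in>states (length mus). \<Sum>ks\<in>states (length mus). Eop q s z mus l iss js * (Eop q s z mus m js ks * v ks))"
    by (simp add: applyE_def sum_distrib_left)
  also have "\<dots> = (\<Sum>ks\<in>states (length mus). \<Sum>js\<in>states (length mus). Eop q s z mus l iss js * (Eop q s z mus m js ks * v ks))"
    by (rule sum.swap)
  also have "\<dots> = (\<Sum>ks\<in>states (length mus). PP q s z mus l m 1 1 3 3 iss ks * v ks)"
    by (simp add: PP_def Eop_def sum_distrib_right mult.assoc)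
  finally show ?thesis .
qed

lemma FE_comm:
  assumes s0: "s \<noteq> 0" and sq: "s^2 = q" and zc: "z = q \<or> z = -(q^3)"
  shows "FE q s z mus l (FE q s z mus m v) = FE q s z mus m (FE q s z mus l v)"
proof -
  have c: "FE q s z mus a (FE q s z mus b v) = clean (length mus) (applyE q s z mus a (applyE q s z mus b v))" for a b
    unfolding FE_def
    by (subst applyE_agree[of mus "clean (length mus) (applyE q s z mus b v)" "applyE q s z mus b v"])
       (auto simp: clean_def)
  show ?thesis unfolding c clean_def
  proof (intro ext)
    fix iss
    show "(if iss \<in> states (length mus) then applyE q s z mus l (applyE q s z mus m v) iss else 0) =
          (if iss \<in> states (length mus) then applyE q s z mus m (applyE q s z mus l v) iss else 0)"
    proof (cases "iss \<in> states (length mus)")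
      case True
      have "applyE q s z mus l (applyE q s z mus m v) iss = applyE q s z mus m (applyE q s z mus l v) iss"
        unfolding applyE_applyE
        by (intro sum.cong refl arg_cong2[where f = "(*)"] PP_comm[OF s0 sq zc])
           (use True in \<open>auto simp: states_def\<close>)
      then show ?thesis by simp
    qed simp
  qed
qed

lemma foldl_shift:
  assumes "\<And>a b v. G a (G b v) = G b (G a v)"
  shows "foldl (\<lambda>v l. G l v) (G x v) xs = G x (foldl (\<lambda>v l. G l v) v xs)"
proof (induction xs arbitrary: v)
  case Nil
  then show ?case by simp
next
  case (Cons a xs)
  have "G a (G x v) = G x (G a v)" by (rule assms)
  then show ?case using Cons.IH by simp
qed

lemma foldl_rev:
  assumes "\<And>a b v. G a (G b v) = G b (G a v)"
  shows "foldl (\<lambda>v l. G l v) v0 xs = foldl (\<lambda>v l. G l v) v0 (rev xs)"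
proof (induction xs arbitrary: v0)
  case Nil
  then show ?case by simp
next
  case (Cons x xs)
  have "foldl (\<lambda>v l. G l v) v0 (x # xs) = G x (foldl (\<lambda>v l. G l v) v0 xs)"
    using foldl_shift[of G x v0 xs, OF assms] by simp
  also have "\<dots> = G x (foldl (\<lambda>v l. G l v) v0 (rev xs))" using Cons.IH by simp
  also have "\<dots> = foldl (\<lambda>v l. G l v) v0 (rev (x # xs))" by simp
  finally show ?case .
qed

lemma states_rep: "k \<le> n \<Longrightarrow> replicate k 1 @ replicate (n - k) 3 \<in> states n"
  by (auto simp: states_def)

lemma FE_dvec:
  assumes k: "k < length mus"
  shows "FE q s z mus (mus ! k) (\<lambda>js. c * dvec (replicate (Suc k) 1 @ replicate (length mus - Suc k) 3) js)
   = (\<lambda>js. (c * prod_list (map (\<lambda>\<nu>. wa q z (mus ! k - \<nu>)) mus)) * dvec (replicate k 1 @ replicate (length mus - k) 3) js)"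
proof (intro ext)
  fix iss
  let ?w = "replicate (Suc k) 1 @ replicate (length mus - Suc k) (3::nat)"
  let ?w' = "replicate k 1 @ replicate (length mus - k) (3::nat)"
  have w: "?w \<in> states (length mus)" using k states_rep[of "Suc k" "length mus"] by simp
  have w': "?w' \<in> states (length mus)" using k states_rep[of k "length mus"] by simp
  have a: "applyE q s z mus (mus ! k) (\<lambda>js. c * dvec ?w js) iss = c * Eop q s z mus (mus ! k) iss ?w"
  proof -
    have "applyE q s z mus (mus ! k) (\<lambda>js. c * dvec ?w js) iss =
      (\<Sum>js\<in>states (length mus). if js = ?w then c * Eop q s z mus (mus ! k) iss js else 0)"
      unfolding applyE_def dvec_def by (intro sum.cong refl) auto
    also have "\<dots> = c * Eop q s z mus (mus ! k) iss ?w"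
      using w finite_states by simp
    finally show ?thesis .
  qed
  show "FE q s z mus (mus ! k) (\<lambda>js. c * dvec ?w js) iss =
    c * prod_list (map (\<lambda>\<nu>. wa q z (mus ! k - \<nu>)) mus) * dvec ?w' iss"
  proof (cases "iss \<in> states (length mus)")
    case True
    then show ?thesis unfolding FE_def clean_def a
      using Eop_frozen[OF k True, of q s z] by (simp add: dvec_def)
  next
    case False
    then have "iss \<noteq> ?w'" using w' by auto
    then show ?thesis using False unfolding FE_def clean_def by (simp add: dvec_def)
  qed
qed

lemma main_fold:
  assumes "k \<le> length mus"
  shows "foldl (\<lambda>v l. FE q s z mus l v) (\<lambda>js. if js = replicate (length mus) 1 then 1 else 0) (rev (drop k mus))
    = (\<lambda>js. (\<Prod>i\<in>{k..<length mus}. prod_list (map (\<lambda>\<nu>. wa q z (mus ! i - \<nu>)) mus)) *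
        dvec (replicate k 1 @ replicate (length mus - k) 3) js)"
  using assms
proof (induction k rule: inc_induct)
  case base
  then show ?case by (simp add: dvec_def)
next
  case (step k)
  have d: "rev (drop k mus) = rev (drop (Suc k) mus) @ [mus ! k]"
    using step.hyps(2) by (simp add: Cons_nth_drop_Suc[symmetric])
  have p: "(\<Prod>i\<in>{Suc k..<length mus}. prod_list (map (\<lambda>\<nu>. wa q z (mus ! i - \<nu>)) mus)) *
      prod_list (map (\<lambda>\<nu>. wa q z (mus ! k - \<nu>)) mus)
    = (\<Prod>i\<in>{k..<length mus}. prod_list (map (\<lambda>\<nu>. wa q z (mus ! i - \<nu>)) mus))"
    using step.hyps(2) by (simp add: prod.atLeast_Suc_lessThan[of k] mult.commute)
  show ?case
    unfolding d foldl_append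
    using FE_dvec[OF step.hyps(2), of q s z] step.IH p by simp
qed

theorem lemma2p7:
  fixes q s z :: complex and mus :: "complex list"
  assumes "q \<noteq> 0" and "s ^ 2 = q" and "z = q \<or> z = - (q ^ 3)" and "length mus \<ge> 1"
  shows "Zpf q s z mus mus =
    (\<Prod>i<length mus. \<Prod>j<length mus. wa q z (mus ! i - mus ! j))"
proof -
  have sq: "s^2 = q" by (rule assms(2))
  have s0: "s \<noteq> 0" using assms(1,2) by auto
  have zc: "z = q \<or> z = -(q^3)" by (rule assms(3))
  define v0 where "v0 = (\<lambda>js. if js = replicate (length mus) (1::nat) then (1::complex) else 0)"
  have r3: "replicate (length mus) 3 \<in> states (length mus)"
    using states_rep[of 0 "length mus"] by simp
  have "Zpf q s z mus mus = foldl (\<lambda>v l. applyE q s z mus l v) v0 mus (replicate (length mus) 3)"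
    by (simp add: Zpf_def v0_def)
  also have "\<dots> = foldl (\<lambda>v l. FE q s z mus l v) v0 mus (replicate (length mus) 3)"
    using foldl_agree[of mus v0 v0 q s z mus] r3 by blast
  also have "\<dots> = foldl (\<lambda>v l. FE q s z mus l v) v0 (rev mus) (replicate (length mus) 3)"
    using foldl_rev[of "FE q s z mus", OF FE_comm[OF s0 sq zc]] by metis
  also have "\<dots> = (\<Prod>i\<in>{0..<length mus}. prod_list (map (\<lambda>\<nu>. wa q z (mus ! i - \<nu>)) mus))"
    using main_fold[of 0 mus q s z] by (simp add: dvec_def v0_def)
  also have "\<dots> = (\<Prod>i<length mus. \<Prod>j<length mus. wa q z (mus ! i - mus ! j))"
    by (simp add: prod_list_nth atLeast0LessThan)
  finally show ?thesis .
qed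

end
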